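(* Let $n\ge1$, $l>2$ an odd integer, $\varepsilon$ a primitive $l$-th root of unity, $\lambda=(\lambda_i)_{i=1}^n\in\{0,\dots,l-1\}^n$ with $\lambda\neq0$, and $\mathbf a_+,\mathbf a_-\in\mathbb C^\times$. Write $\mathrm{supp}(\lambda)=\{i\mid\lambda_i\ne0\}=\{i_1,\dots,i_m\}$ with $i_1<\dots<i_m$, and $\lambda^{(i)}=\sum_{k=1}^{i-1}\lambda_k-\sum_{k=i+1}^n\lambda_k$. Then $\mathbf a_+=\mathbf a_-\varepsilon^{2(\lambda^{(i)}+i)}$ for all $i\in\mathrm{supp}(\lambda)$ if and only if both of the following hold: (a) for every $2\le r\le m$, $$\lambda_{i_r}\equiv(-1)^{r-1}\lambda_{i_1}+(-1)^r i_1-i_r+2\sum_{k=2}^{r-1}(-1)^{r-1+k}i_k\not\equiv0\pmod l;$$ (b) $\mathbf a_+=\mathbf a_-\varepsilon^{2\sum_{k=1}^m(-1)^{k-1}i_k}$ if $m$ is odd, and $\mathbf a_+=\mathbf a_-\varepsilon^{2(\lambda_{i_1}+\sum_{k=2}^m(-1)^k i_k)}$ if $m$ is even. *)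

theory Defs
  imports "HOL-Analysis.Analysis" "HOL-Number_Theory.Cong"
begin

definition primitive_root_of_unity :: "nat \<Rightarrow> complex \<Rightarrow> bool" where
  "primitive_root_of_unity l e \<longleftrightarrow> e ^ l = 1 \<and> (\<forall>k. 0 < k \<and> k < l \<longrightarrow> e ^ k \<noteq> 1)"

definition supp :: "nat \<Rightarrow> (nat \<Rightarrow> nat) \<Rightarrow> nat set" where
  "supp n lam = {i \<in> {1..n}. lam i \<noteq> 0}"

definition supp_idx :: "nat \<Rightarrow> (nat \<Rightarrow> nat) \<Rightarrow> nat \<Rightarrow> nat" where
  "supp_idx n lam k = sorted_list_of_set (supp n lam) ! (k - 1)"

definition lam_sup :: "nat \<Rightarrow> (nat \<Rightarrow> nat) \<Rightarrow> nat \<Rightarrow> int" where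
  "lam_sup n lam i = (\<Sum>k=1..i-1. int (lam k)) - (\<Sum>k=i+1..n. int (lam k))"

end

theory Submission
  imports Defs
begin

lemma E_step:
  fixes a i :: "nat \<Rightarrow> int"
  defines "E \<equiv> (\<lambda>r. (-1) ^ (r - 1) * a 1 + (-1) ^ r * i 1 - i r
                  + 2 * (\<Sum>k=2..r-1. (-1) ^ (r - 1 + k) * i k))"
  assumes "r \<ge> 1"
  shows "(if Suc r = 1 then a 1 else E (Suc r)) = - (if r = 1 then a 1 else E r) - i (Suc r) + i r"
proof (cases "r = 1")
  case True
  then show ?thesis by (simp add: E_def)
next
  case False
  then obtain q where q: "r = Suc q" "q \<ge> 1" using assms(2) by (cases r) auto
  have s: "(\<Sum>k=2..r. (-1::int) ^ (r + k) * i k) = (\<Sum>k=2..r-1. (-1) ^ (r + k) * i k) + i r"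
  proof -
    have "{2..r} = insert r {2..r-1}" using q by auto
    then show ?thesis using q by (simp add: add.commute)
  qed
  have t: "(\<Sum>k=2..r-1. (-1::int) ^ (r - 1 + k) * i k) = - (\<Sum>k=2..r-1. (-1) ^ (r + k) * i k)"
    by (simp add: q sum_negf[symmetric])
  show ?thesis using False q s t by (simp add: E_def algebra_simps)
qed

definition Tsum :: "(nat \<Rightarrow> int) \<Rightarrow> nat \<Rightarrow> int" where
  "Tsum i m = (\<Sum>k=2..m. (-1) ^ k * i k)"

lemma alt_sum: "m \<ge> 1 \<Longrightarrow> (\<Sum>k=1..m. (-1::int) ^ (k - 1) * i k) = i 1 - Tsum i m"
proof (induction m)
  case 0 then show ?case by simp
next
  case (Suc m)
  show ?case
  proof (cases "m = 0")
    case True then show ?thesis by (simp add: Tsum_def)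
  next
    case False
    then have "m \<ge> 1" by simp
    then show ?thesis using Suc.IH by (simp add: Tsum_def)
  qed
qed

lemma Tsum_Suc: "m \<ge> 1 \<Longrightarrow> Tsum i (Suc m) = Tsum i m + (-1) ^ Suc m * i (Suc m)"
  by (simp add: Tsum_def)

lemma B_id:
  fixes a i :: "nat \<Rightarrow> int"
  defines "B \<equiv> (\<lambda>m. if odd m then (\<Sum>k=1..m. (-1) ^ (k - 1) * i k) else a 1 + (\<Sum>k=2..m. (-1) ^ k * i k))"
  assumes "m \<ge> 1"
  shows "B (Suc m) + B m = a 1 + i 1 + i (Suc m)"
proof -
  have "B m = (if odd m then i 1 - Tsum i m else a 1 + Tsum i m)"
    using assms alt_sum[of m i] by (simp add: B_def Tsum_def)
  moreover have "B (Suc m) = (if odd (Suc m) then i 1 - Tsum i (Suc m) else a 1 + Tsum i (Suc m))"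
    using assms alt_sum[of "Suc m" i] by (simp add: B_def Tsum_def del: sum.cl_ivl_Suc)
  ultimately show ?thesis using Tsum_Suc[OF assms(2), of i] by auto
qed


lemma upto_induct_aux:
  assumes "P 1" "\<And>r. 1 \<le> r \<Longrightarrow> r < m \<Longrightarrow> P r \<Longrightarrow> P (Suc r)"
  shows "\<forall>r\<in>{1..m}. P r"
proof -
  have "1 \<le> r \<Longrightarrow> r \<le> m \<Longrightarrow> P r" for r
  proof (induction r)
    case 0 then show ?case by simp
  next
    case (Suc r)
    show ?case
    proof (cases "r = 0")
      case True then show ?thesis using assms(1) by simp
    next
      case False then show ?thesis using Suc assms(2)[of r] by simp
    qed
  qed
  then show ?thesis by auto
qed

lemma chain:
  fixes a i f E' :: "nat \<Rightarrow> int" and l :: int and m :: nat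
  assumes hf: "\<And>r. 1 \<le> r \<Longrightarrow> r < m \<Longrightarrow> f (Suc r) - f r = a r + a (Suc r) + i (Suc r) - i r"
    and he: "\<And>r. 1 \<le> r \<Longrightarrow> E' (Suc r) = - E' r - i (Suc r) + i r"
    and he1: "E' 1 = a 1"
  shows "(\<forall>r\<in>{1..m}. l dvd f r - f 1) \<longleftrightarrow> (\<forall>r\<in>{1..m}. l dvd a r - E' r)"
proof -
  define C where "C \<longleftrightarrow> (\<forall>r. 1 \<le> r \<longrightarrow> r < m \<longrightarrow> l dvd a r + a (Suc r) + i (Suc r) - i r)"
  have 1: "(\<forall>r\<in>{1..m}. l dvd f r - f 1) \<longleftrightarrow> C"
  proof
    assume H: "\<forall>r\<in>{1..m}. l dvd f r - f 1"
    show C unfolding C_def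
    proof (intro allI impI)
      fix r assume r: "1 \<le> r" "r < m"
      have "l dvd (f (Suc r) - f 1) - (f r - f 1)" using H r dvd_diff[of l "f (Suc r) - f 1" "f r - f 1"] by auto
      then show "l dvd a r + a (Suc r) + i (Suc r) - i r" using hf[OF r] by simp
    qed
  next
    assume C
    show "\<forall>r\<in>{1..m}. l dvd f r - f 1"
    proof (rule upto_induct_aux)
      fix r assume r: "1 \<le> r" "r < m" and "l dvd f r - f 1"
      then have "l dvd (f r - f 1) + (a r + a (Suc r) + i (Suc r) - i r)"
        using \<open>C\<close> unfolding C_def by (intro dvd_add) auto
      moreover have "(f r - f 1) + (a r + a (Suc r) + i (Suc r) - i r) = f (Suc r) - f 1"
        using hf[OF r] by simp
      ultimately show "l dvd f (Suc r) - f 1" by metis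
    qed simp
  qed
  have 2: "(\<forall>r\<in>{1..m}. l dvd a r - E' r) \<longleftrightarrow> C"
  proof
    assume H: "\<forall>r\<in>{1..m}. l dvd a r - E' r"
    show C unfolding C_def
    proof (intro allI impI)
      fix r assume r: "1 \<le> r" "r < m"
      have "l dvd (a r - E' r) + (a (Suc r) - E' (Suc r))" using H r dvd_add[of l "a r - E' r" "a (Suc r) - E' (Suc r)"] by auto
      then show "l dvd a r + a (Suc r) + i (Suc r) - i r" using he[OF r(1)] by (simp add: algebra_simps)
    qed
  next
    assume C
    show "\<forall>r\<in>{1..m}. l dvd a r - E' r"
    proof (rule upto_induct_aux)
      fix r assume r: "1 \<le> r" "r < m" and "l dvd a r - E' r"
      moreover have "l dvd (a r + a (Suc r) + i (Suc r) - i r)"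
        using \<open>C\<close> r unfolding C_def by auto
      ultimately have "l dvd (a r + a (Suc r) + i (Suc r) - i r) - (a r - E' r)"
        by (metis dvd_diff)
      moreover have "(a r + a (Suc r) + i (Suc r) - i r) - (a r - E' r) = a (Suc r) - E' (Suc r)"
        using he[OF r(1)] by (simp add: algebra_simps)
      ultimately show "l dvd a (Suc r) - E' (Suc r)" by metis
    qed (simp add: he1[unfolded One_nat_def])
  qed
  show ?thesis using 1 2 by simp
qed

lemma fm_B:
  fixes a i E' B :: "nat \<Rightarrow> int"
  assumes he: "\<And>r. 1 \<le> r \<Longrightarrow> E' (Suc r) = - E' r - i (Suc r) + i r"
    and he1: "E' 1 = a 1"
    and hB: "\<And>m. 1 \<le> m \<Longrightarrow> B (Suc m) + B m = a 1 + i 1 + i (Suc m)"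
    and hB1: "B 1 = i 1"
    and m: "1 \<le> m"
  shows "(\<Sum>s=1..<m. E' s) + i m = B m \<and> 2 * B m = a 1 + i 1 + i m - E' m"
  using m
proof (induction m)
  case 0 then show ?case by simp
next
  case (Suc m)
  show ?case
  proof (cases "m = 0")
    case True then show ?thesis using hB1 he1 by simp
  next
    case False
    then have m1: "1 \<le> m" by simp
    have IH: "(\<Sum>s=1..<m. E' s) + i m = B m" "2 * B m = a 1 + i 1 + i m - E' m"
      using Suc.IH m1 by auto
    have "(\<Sum>s=1..<Suc m. E' s) = (\<Sum>s=1..<m. E' s) + E' m" using m1 by simp
    then show ?thesis using IH hB[OF m1] he[OF m1] by (simp add: algebra_simps)
  qed
qed


lemma eps_nz: "primitive_root_of_unity l eps \<Longrightarrow> l > 0 \<Longrightarrow> eps \<noteq> 0"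
  unfolding primitive_root_of_unity_def by (metis zero_neq_one zero_power)

lemma eps_cong:
  assumes "primitive_root_of_unity l eps" "l > 0" "int l dvd x - y"
  shows "eps powi x = eps powi y"
proof -
  have nz: "eps \<noteq> 0" using eps_nz assms by blast
  obtain q where q: "x = y + int l * q" using assms(3) by (metis dvdE add_diff_cancel_left' diff_add_cancel add.commute)
  have "eps powi x = eps powi y * (eps powi int l) powi q"
    using nz by (simp add: q power_int_add power_int_mult)
  also have "eps powi int l = 1" using assms(1) by (simp add: primitive_root_of_unity_def)
  finally show ?thesis by simp
qed

lemma eps_one:
  assumes "primitive_root_of_unity l eps" "l > 0" "eps powi k = 1"
  shows "int l dvd k"
proof -
  define r where "r = k mod int l"
  have r: "0 \<le> r" "r < int l" using assms(2) by (auto simp: r_def)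
  have "int l dvd k - r" unfolding r_def by (simp add: minus_mod_eq_mult_div)
  then have "eps powi k = eps powi r" using eps_cong[OF assms(1,2)] by blast
  also have "\<dots> = eps ^ nat r" using r by (metis power_int_of_nat int_nat_eq)
  finally have "eps ^ nat r = 1" using assms(3) by simp
  then have "nat r = 0" using assms(1) r unfolding primitive_root_of_unity_def
    by (metis nat_less_iff not_gr0)
  then have "r = 0" using r by simp
  then show ?thesis unfolding r_def by auto
qed

lemma eps_iff:
  assumes "primitive_root_of_unity l eps" "l > 0" "odd l"
  shows "eps powi (2 * x) = eps powi (2 * y) \<longleftrightarrow> int l dvd x - y"
proof
  have nz: "eps \<noteq> 0" using eps_nz assms by blast
  assume "eps powi (2 * x) = eps powi (2 * y)"
  then have "eps powi (2 * (x - y)) = 1" using nz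
    by (simp add: right_diff_distrib power_int_diff)
  then have "int l dvd 2 * (x - y)" using eps_one[OF assms(1,2)] by blast
  moreover have "coprime (int l) 2" using assms(3) by simp
  ultimately show "int l dvd x - y" by (metis coprime_dvd_mult_right_iff)
next
  assume "int l dvd x - y"
  then have "int l dvd 2 * x - 2 * y" by (metis dvd_mult right_diff_distrib)
  then show "eps powi (2 * x) = eps powi (2 * y)" using eps_cong[OF assms(1,2)] by blast
qed


lemma supp_sub: "supp n lam \<subseteq> {1..n}" by (auto simp: supp_def)
lemma supp_fin: "finite (supp n lam)" using supp_sub finite_subset by blast

lemma ix_in:
  assumes "r \<in> {1..card (supp n lam)}"
  shows "supp_idx n lam r \<in> supp n lam"
proof -
  have "r - 1 < length (sorted_list_of_set (supp n lam))" using assms by auto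
  then show ?thesis unfolding supp_idx_def
    by (metis nth_mem set_sorted_list_of_set supp_fin)
qed

lemma ix_less:
  assumes "r \<in> {1..card (supp n lam)}" "s \<in> {1..card (supp n lam)}"
  shows "supp_idx n lam s < supp_idx n lam r \<longleftrightarrow> s < r"
proof -
  let ?xs = "sorted_list_of_set (supp n lam)"
  have sw: "sorted_wrt (<) ?xs" by simp
  have L: "length ?xs = card (supp n lam)" by simp
  have *: "a < b \<Longrightarrow> a \<in> {1..card (supp n lam)} \<Longrightarrow> b \<in> {1..card (supp n lam)} \<Longrightarrow>
     supp_idx n lam a < supp_idx n lam b" for a b
    unfolding supp_idx_def using sorted_wrt_nth_less[OF sw, of "a - 1" "b - 1"] L by auto
  show ?thesis using *[of s r] *[of r s] assms
    by (metis less_asym' linorder_neqE_nat)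
qed

lemma S_eq: "supp n lam = supp_idx n lam ` {1..card (supp n lam)}"
proof
  show "supp_idx n lam ` {1..card (supp n lam)} \<subseteq> supp n lam" using ix_in by blast
  show "supp n lam \<subseteq> supp_idx n lam ` {1..card (supp n lam)}"
  proof
    fix x assume "x \<in> supp n lam"
    then have "x \<in> set (sorted_list_of_set (supp n lam))" using supp_fin by simp
    then obtain j where j: "j < length (sorted_list_of_set (supp n lam))" "sorted_list_of_set (supp n lam) ! j = x"
      by (metis in_set_conv_nth)
    then have "x = supp_idx n lam (Suc j)" "Suc j \<in> {1..card (supp n lam)}"
      by (auto simp: supp_idx_def)
    then show "x \<in> supp_idx n lam ` {1..card (supp n lam)}" by blast
  qed
qed

lemma lam_sup_formula:
  assumes r: "r \<in> {1..card (supp n lam)}"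
  shows "lam_sup n lam (supp_idx n lam r) =
    (\<Sum>s=1..<r. int (lam (supp_idx n lam s))) - (\<Sum>s\<in>{r<..card (supp n lam)}. int (lam (supp_idx n lam s)))"
proof -
  let ?S = "supp n lam" and ?m = "card (supp n lam)" and ?ix = "supp_idx n lam"
  define j where "j = ?ix r"
  have jS: "j \<in> ?S" using ix_in[OF r] j_def by simp
  have jn: "1 \<le> j" "j \<le> n" using jS unfolding supp_def by simp_all
  have inj: "inj_on ?ix {1..?m}"
  proof (rule inj_onI)
    fix x y assume x: "x \<in> {1..?m}" and y: "y \<in> {1..?m}" and eq: "?ix x = ?ix y"
    show "x = y"
    proof (rule ccontr)
      assume "x \<noteq> y"
      then have "x < y \<or> y < x" by arith
      then show False using ix_less[OF x y] ix_less[OF y x] eq by auto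
    qed
  qed
  have set1: "?S \<inter> {..<j} = ?ix ` {1..<r}"
  proof
    show "?S \<inter> {..<j} \<subseteq> ?ix ` {1..<r}"
    proof
      fix x assume x: "x \<in> ?S \<inter> {..<j}"
      then obtain s where s: "s \<in> {1..?m}" "x = ?ix s" using S_eq by blast
      then have "s < r" using ix_less[OF r s(1)] x j_def by auto
      then show "x \<in> ?ix ` {1..<r}" using s by auto
    qed
    show "?ix ` {1..<r} \<subseteq> ?S \<inter> {..<j}"
      using ix_in ix_less[OF r] r j_def by auto
  qed
  have set2: "?S \<inter> {j<..} = ?ix ` {r<..?m}"
  proof
    show "?S \<inter> {j<..} \<subseteq> ?ix ` {r<..?m}"
    proof
      fix x assume x: "x \<in> ?S \<inter> {j<..}"
      then obtain s where s: "s \<in> {1..?m}" "x = ?ix s" using S_eq by blast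
      then have "r < s" using ix_less[OF s(1) r] x j_def by auto
      then show "x \<in> ?ix ` {r<..?m}" using s by auto
    qed
    show "?ix ` {r<..?m} \<subseteq> ?S \<inter> {j<..}"
    proof
      fix x assume "x \<in> ?ix ` {r<..?m}"
      then obtain s where s: "s \<in> {r<..?m}" "x = ?ix s" by blast
      then have s1: "s \<in> {1..?m}" using r by auto
      show "x \<in> ?S \<inter> {j<..}" using ix_in[OF s1] ix_less[OF s1 r] s j_def by auto
    qed
  qed
  have A: "(\<Sum>k=1..j-1. int (lam k)) = (\<Sum>k\<in>?S \<inter> {..<j}. int (lam k))"
  proof (rule sum.mono_neutral_right)
    show "?S \<inter> {..<j} \<subseteq> {1..j-1}" using supp_sub by fastforce
    show "\<forall>i\<in>{1..j - 1} - ?S \<inter> {..<j}. int (lam i) = 0" using jn by (auto simp: supp_def)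
  qed simp
  have B: "(\<Sum>k=j+1..n. int (lam k)) = (\<Sum>k\<in>?S \<inter> {j<..}. int (lam k))"
  proof (rule sum.mono_neutral_right)
    show "?S \<inter> {j<..} \<subseteq> {j+1..n}" using supp_sub by fastforce
    show "\<forall>i\<in>{j+1..n} - ?S \<inter> {j<..}. int (lam i) = 0" using jn by (auto simp: supp_def)
  qed simp
  have A': "(\<Sum>k\<in>?S \<inter> {..<j}. int (lam k)) = (\<Sum>s=1..<r. int (lam (?ix s)))"
    unfolding set1 by (rule sum.reindex_cong[OF inj_on_subset[OF inj]]) (use r in auto)
  have B': "(\<Sum>k\<in>?S \<inter> {j<..}. int (lam k)) = (\<Sum>s\<in>{r<..?m}. int (lam (?ix s)))"
    unfolding set2 by (rule sum.reindex_cong[OF inj_on_subset[OF inj]]) (use r in auto)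
  show ?thesis unfolding lam_sup_def j_def[symmetric] A B A' B' ..
qed


theorem proposition4p15:
  fixes n l :: nat and eps ap am :: complex and lam :: "nat \<Rightarrow> nat"
  assumes "n \<ge> 1" and "l > 2" and "odd l"
    and "primitive_root_of_unity l eps"
    and "\<forall>i\<in>{1..n}. lam i < l"
    and "\<exists>i\<in>{1..n}. lam i \<noteq> 0"
    and "ap \<noteq> 0" and "am \<noteq> 0"
  shows "(\<forall>i\<in>supp n lam. ap = am * eps powi (2 * (lam_sup n lam i + int i))) \<longleftrightarrow>
    (let m = card (supp n lam); ix = supp_idx n lam;
         E = (\<lambda>r. (-1) ^ (r - 1) * int (lam (ix 1)) + (-1) ^ r * int (ix 1) - int (ix r)
                  + 2 * (\<Sum>k=2..r-1. (-1) ^ (r - 1 + k) * int (ix k)))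
     in (\<forall>r\<in>{2..m}. [int (lam (ix r)) = E r] (mod int l) \<and> \<not> [E r = 0] (mod int l))
        \<and> (if odd m then ap = am * eps powi (2 * (\<Sum>k=1..m. (-1) ^ (k - 1) * int (ix k)))
           else ap = am * eps powi (2 * (int (lam (ix 1)) + (\<Sum>k=2..m. (-1) ^ k * int (ix k))))))"
proof -
  define m where "m = card (supp n lam)"
  define ix where "ix = supp_idx n lam"
  define a where "a = (\<lambda>s. int (lam (ix s)))"
  define ii where "ii = (\<lambda>s. int (ix s))"
  define f where "f = (\<lambda>r. lam_sup n lam (ix r) + int (ix r))"
  define E where "E = (\<lambda>r. (-1) ^ (r - 1) * int (lam (ix 1)) + (-1) ^ r * int (ix 1) - int (ix r)
                  + 2 * (\<Sum>k=2..r-1. (-1) ^ (r - 1 + k) * int (ix k)))"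
  define E' where "E' = (\<lambda>r. if r = 1 then a 1 else E r)"
  define B where "B = (\<lambda>m. if odd m then (\<Sum>k=1..m. (-1) ^ (k - 1) * ii k) else a 1 + (\<Sum>k=2..m. (-1) ^ k * ii k))"
  have l0: "l > 0" using assms(2) by simp
  have m1: "m \<ge> 1"
  proof -
    have "supp n lam \<noteq> {}" using assms(6) by (auto simp: supp_def)
    then show ?thesis unfolding m_def using supp_fin[of n lam] by (simp add: Suc_le_eq card_gt_0_iff)
  qed
  have he: "E' (Suc r) = - E' r - ii (Suc r) + ii r" if "1 \<le> r" for r
    using E_step[of r a ii, OF that] unfolding E'_def E_def a_def ii_def by simp
  have he1: "E' 1 = a 1" by (simp add: E'_def)
  have hB: "B (Suc k) + B k = a 1 + ii 1 + ii (Suc k)" if "1 \<le> k" for k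
    using B_id[of k ii a, OF that] unfolding B_def by simp
  have hB1: "B 1 = ii 1" by (simp add: B_def)
  have fform: "f r = (\<Sum>s=1..<r. a s) - (\<Sum>s\<in>{r<..m}. a s) + ii r" if "r \<in> {1..m}" for r
    using lam_sup_formula[of r n lam] that unfolding f_def a_def ii_def m_def ix_def by simp
  have hf: "f (Suc r) - f r = a r + a (Suc r) + ii (Suc r) - ii r" if "1 \<le> r" "r < m" for r
  proof -
    have "{r<..m} = insert (Suc r) {Suc r<..m}" using that by auto
    then have "(\<Sum>s\<in>{r<..m}. a s) = a (Suc r) + (\<Sum>s\<in>{Suc r<..m}. a s)" by simp
    moreover have "(\<Sum>s=1..<Suc r. a s) = (\<Sum>s=1..<r. a s) + a r" using that by simp
    ultimately show ?thesis using fform[of r] fform[of "Suc r"] that by simp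
  qed
  have fm: "f m = (\<Sum>s=1..<m. a s) + ii m" using fform[of m] m1 by simp
  have chainI: "(\<forall>r\<in>{1..m}. int l dvd f r - f 1) \<longleftrightarrow> (\<forall>r\<in>{1..m}. int l dvd a r - E' r)"
    by (rule chain[of m f a ii E']) (use hf he he1 in auto)
  have fmB: "(\<Sum>s=1..<m. E' s) + ii m = B m"
    using fm_B[of E' ii a B m] he he1 hB hB1 m1 by blast
  have fmB2: "int l dvd f m - B m" if "\<forall>r\<in>{1..m}. int l dvd a r - E' r"
  proof -
    have "f m - B m = (\<Sum>s=1..<m. a s - E' s)" using fm fmB by (simp add: sum_subtractf)
    moreover have "int l dvd (\<Sum>s=1..<m. a s - E' s)" using that by (intro dvd_sum) auto
    ultimately show ?thesis by simp
  qed
  have key: "eps powi (2 * x) = eps powi (2 * y) \<longleftrightarrow> int l dvd x - y" for x y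
    using eps_iff[OF assms(4) l0 assms(3)] by blast
  have arange: "0 < a r \<and> a r < int l" if "r \<in> {1..m}" for r
  proof -
    have "ix r \<in> supp n lam" using ix_in[of r n lam] that unfolding m_def ix_def by simp
    then show ?thesis using assms(5) unfolding a_def supp_def by auto
  qed
  have LHS: "(\<forall>i\<in>supp n lam. ap = am * eps powi (2 * (lam_sup n lam i + int i))) \<longleftrightarrow>
        (\<forall>r\<in>{1..m}. ap = am * eps powi (2 * f r))"
    unfolding f_def m_def ix_def by (subst S_eq) simp
  have RHSa: "(\<forall>r\<in>{2..m}. [int (lam (ix r)) = E r] (mod int l) \<and> \<not> [E r = 0] (mod int l))
      \<longleftrightarrow> (\<forall>r\<in>{1..m}. int l dvd a r - E' r)"
  proof
    assume H: "\<forall>r\<in>{2..m}. [int (lam (ix r)) = E r] (mod int l) \<and> \<not> [E r = 0] (mod int l)"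
    show "\<forall>r\<in>{1..m}. int l dvd a r - E' r"
    proof
      fix r assume r: "r \<in> {1..m}"
      show "int l dvd a r - E' r"
      proof (cases "r = 1")
        case True then show ?thesis by (simp add: E'_def)
      next
        case False
        then have "r \<in> {2..m}" using r by auto
        then show ?thesis using H False unfolding E'_def a_def by (simp add: cong_iff_dvd_diff)
      qed
    qed
  next
    assume H: "\<forall>r\<in>{1..m}. int l dvd a r - E' r"
    show "\<forall>r\<in>{2..m}. [int (lam (ix r)) = E r] (mod int l) \<and> \<not> [E r = 0] (mod int l)"
    proof
      fix r assume r: "r \<in> {2..m}"
      then have r1: "r \<in> {1..m}" "r \<noteq> 1" by auto
      have "int l dvd a r - E' r" using H r1(1) by blast
      then have d: "int l dvd a r - E r" using r1(2) unfolding E'_def by simp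
      have nd: "\<not> int l dvd E r"
      proof
        assume "int l dvd E r"
        then have "int l dvd a r" using d by (metis dvd_diff_right_iff diff_add_cancel dvd_add)
        then show False using arange[OF r1(1)] zdvd_imp_le by fastforce
      qed
      show "[int (lam (ix r)) = E r] (mod int l) \<and> \<not> [E r = 0] (mod int l)"
        using d nd unfolding a_def by (simp add: cong_iff_dvd_diff)
    qed
  qed
  have RHSb: "(if odd m then ap = am * eps powi (2 * (\<Sum>k=1..m. (-1) ^ (k - 1) * int (ix k)))
           else ap = am * eps powi (2 * (int (lam (ix 1)) + (\<Sum>k=2..m. (-1) ^ k * int (ix k)))))
       \<longleftrightarrow> ap = am * eps powi (2 * B m)"
    unfolding B_def a_def ii_def by simp
  have main: "(\<forall>r\<in>{1..m}. ap = am * eps powi (2 * f r)) \<longleftrightarrow>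
     (\<forall>r\<in>{1..m}. int l dvd a r - E' r) \<and> ap = am * eps powi (2 * B m)"
  proof
    assume H: "\<forall>r\<in>{1..m}. ap = am * eps powi (2 * f r)"
    have c: "\<forall>r\<in>{1..m}. int l dvd f r - f 1"
    proof
      fix r assume r: "r \<in> {1..m}"
      have "1 \<in> {1..m}" using m1 by simp
      then have "ap = am * eps powi (2 * f 1)" using H by blast
      moreover have "ap = am * eps powi (2 * f r)" using H r by blast
      ultimately have "am * eps powi (2 * f r) = am * eps powi (2 * f 1)" by simp
      then have "eps powi (2 * f r) = eps powi (2 * f 1)" using assms(8) by simp
      then show "int l dvd f r - f 1" using key by blast
    qed
    then have c2: "\<forall>r\<in>{1..m}. int l dvd a r - E' r" using chainI by blast
    have "int l dvd f m - B m" using fmB2 c2 by blast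
    moreover have "int l dvd f m - f 1" using c m1 by auto
    ultimately have "int l dvd (f m - B m) - (f m - f 1)" by (rule dvd_diff)
    then have "int l dvd f 1 - B m" by simp
    then have "eps powi (2 * f 1) = eps powi (2 * B m)" using key by blast
    then show "(\<forall>r\<in>{1..m}. int l dvd a r - E' r) \<and> ap = am * eps powi (2 * B m)"
      using c2 H m1 by auto
  next
    assume H: "(\<forall>r\<in>{1..m}. int l dvd a r - E' r) \<and> ap = am * eps powi (2 * B m)"
    then have c: "\<forall>r\<in>{1..m}. int l dvd f r - f 1" using chainI by blast
    have fb: "int l dvd f m - B m" using fmB2 H by blast
    show "\<forall>r\<in>{1..m}. ap = am * eps powi (2 * f r)"
    proof
      fix r assume r: "r \<in> {1..m}"
      have m1': "m \<in> {1..m}" using m1 by simp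
      have d1: "int l dvd f r - f 1" using c r by blast
      have d2: "int l dvd f m - f 1" using c m1' by blast
      have "int l dvd (f r - f 1) - (f m - f 1)" using d1 d2 by (rule dvd_diff)
      then have "int l dvd (f r - f 1) - (f m - f 1) + (f m - B m)" using fb by (rule dvd_add)
      then have "int l dvd f r - B m" by simp
      then have "eps powi (2 * f r) = eps powi (2 * B m)" using key by blast
      then show "ap = am * eps powi (2 * f r)" using H by simp
    qed
  qed
  have R: "(let m = card (supp n lam); ix = supp_idx n lam;
         E = (\<lambda>r. (-1) ^ (r - 1) * int (lam (ix 1)) + (-1) ^ r * int (ix 1) - int (ix r)
                  + 2 * (\<Sum>k=2..r-1. (-1) ^ (r - 1 + k) * int (ix k)))
     in (\<forall>r\<in>{2..m}. [int (lam (ix r)) = E r] (mod int l) \<and> \<not> [E r = 0] (mod int l))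
        \<and> (if odd m then ap = am * eps powi (2 * (\<Sum>k=1..m. (-1) ^ (k - 1) * int (ix k)))
           else ap = am * eps powi (2 * (int (lam (ix 1)) + (\<Sum>k=2..m. (-1) ^ k * int (ix k))))))
    \<longleftrightarrow> (\<forall>r\<in>{2..m}. [int (lam (ix r)) = E r] (mod int l) \<and> \<not> [E r = 0] (mod int l))
        \<and> (if odd m then ap = am * eps powi (2 * (\<Sum>k=1..m. (-1) ^ (k - 1) * int (ix k)))
           else ap = am * eps powi (2 * (int (lam (ix 1)) + (\<Sum>k=2..m. (-1) ^ k * int (ix k)))))"
    unfolding Let_def m_def ix_def E_def by (rule refl)
  show ?thesis unfolding R LHS main RHSa RHSb ..
qed

end
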